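(* Let $\Phi:[0,\infty)\to[0,\infty)$ be nondecreasing with $\Phi(0)=0$, and let $\Psi:[0,\infty)\to[0,\infty)$ be nondecreasing and convex with $\Psi(0)=0$. Let $x=(x_n)$, $y=(y_n)$ be real sequences tending to $0$ such that $x\gtrless y$ and $\sum_{j=1}^\infty\Phi(|y_j|)\le\sum_{j=1}^\infty\Phi(|x_j|)<\infty$. Then \[ \sum_{j=1}^\infty\Psi(\Phi(|x_j|))\ge\sum_{j=1}^\infty\Psi(\Phi(|y_j|)) \] (with values in $[0,\infty]$).
   Context: For a real sequence $x\to0$, $x^*=(x_n^* )$ is the nonincreasing permutation of $(|x_n|)$. $x\gtrless y$ means there is $n_0\in\mathbb N$ with $x_n^*\ge y_n^*$ for $n\le n_0$ and $x_n^*\le y_n^*$ for $n>n_0$. *)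

theory Defs
  imports "HOL-Analysis.Analysis"
begin

text \<open>Nonincreasing rearrangement (0-indexed): the value at position n is the
(n+1)-th largest of the numbers |x k|, counted with multiplicity, i.e.
inf of all t \<ge> 0 such that fewer than n+1 indices k satisfy |x k| > t.\<close>
definition decr_rearr :: "(nat \<Rightarrow> real) \<Rightarrow> nat \<Rightarrow> real" where
  "decr_rearr x n = Inf {t. t \<ge> 0 \<and> finite {k. \<bar>x k\<bar> > t} \<and> card {k. \<bar>x k\<bar> > t} \<le> n}"

text \<open>x \<gtrless> y : there is n0 with x*_n \<ge> y*_n for the first n0 positions and
x*_n \<le> y*_n afterwards (paper indexing from 1, n0 \<in> {1,2,...}; here 0-indexed).\<close>
definition gtrless :: "(nat \<Rightarrow> real) \<Rightarrow> (nat \<Rightarrow> real) \<Rightarrow> bool" where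
  "gtrless x y \<longleftrightarrow> (\<exists>n0. (\<forall>n\<le>n0. decr_rearr x n \<ge> decr_rearr y n) \<and>
                         (\<forall>n>n0. decr_rearr x n \<le> decr_rearr y n))"

end

theory Submission
  imports Defs
begin


lemma D_fin:
  assumes "(x::nat\<Rightarrow>real) \<longlonglongrightarrow> 0" "t > 0"
  shows "finite {k. \<bar>x k\<bar> > t}"
proof -
  from assms have "eventually (\<lambda>k. dist (x k) 0 < t) sequentially" by (rule tendstoD)
  then obtain N where N: "\<And>k. k \<ge> N \<Longrightarrow> \<bar>x k\<bar> < t" by (auto simp: eventually_sequentially)
  have "{k. \<bar>x k\<bar> > t} \<subseteq> {..<N}" using N by (force simp: not_less[symmetric])
  then show ?thesis using finite_subset by blast
qed

lemma S_ne:
  assumes "(x::nat\<Rightarrow>real) \<longlonglongrightarrow> 0"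
  shows "{t. t \<ge> 0 \<and> finite {k. \<bar>x k\<bar> > t} \<and> card {k. \<bar>x k\<bar> > t} \<le> n} \<noteq> {}"
proof -
  obtain B where B: "\<And>k. norm (x k) \<le> B" using convergent_imp_Bseq[of x] assms BseqE convergent_def by metis
  have "B \<ge> 0" using B[of 0] by simp
  moreover have "{k. \<bar>x k\<bar> > B} = {}" using B by (force simp: not_less[symmetric])
  ultimately have "B \<in> {t. t \<ge> 0 \<and> finite {k. \<bar>x k\<bar> > t} \<and> card {k. \<bar>x k\<bar> > t} \<le> n}" by simp
  then show ?thesis by blast
qed

lemma S_bdd: "bdd_below {t. t \<ge> 0 \<and> finite {k. \<bar>x k\<bar> > t} \<and> card {k. \<bar>x k\<bar> > (t::real)} \<le> n}"
  by (rule bdd_belowI[of _ 0]) auto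

lemma dr_nonneg: assumes "(x::nat\<Rightarrow>real) \<longlonglongrightarrow> 0" shows "decr_rearr x n \<ge> 0"
  unfolding decr_rearr_def using S_ne[OF assms] by (intro cInf_greatest) auto

lemma dr_antimono: assumes "(x::nat\<Rightarrow>real) \<longlonglongrightarrow> 0" "n \<le> m" shows "decr_rearr x m \<le> decr_rearr x n"
  unfolding decr_rearr_def using S_ne[OF assms(1)] assms(2)
  by (intro cInf_superset_mono S_bdd) auto

lemma dr_le_iff:
  assumes "(x::nat\<Rightarrow>real) \<longlonglongrightarrow> 0" "t > 0"
  shows "decr_rearr x n \<le> t \<longleftrightarrow> card {k. \<bar>x k\<bar> > t} \<le> n"
proof
  assume "card {k. \<bar>x k\<bar> > t} \<le> n"
  then show "decr_rearr x n \<le> t" unfolding decr_rearr_def using D_fin[OF assms] assms(2)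
    by (intro cInf_lower S_bdd) auto
next
  assume le: "decr_rearr x n \<le> t"
  show "card {k. \<bar>x k\<bar> > t} \<le> n"
  proof (rule ccontr)
    assume c: "\<not> ?thesis"
    define D where "D = {k. \<bar>x k\<bar> > t}"
    have fD: "finite D" using D_fin[OF assms] D_def by simp
    have Dne: "D \<noteq> {}" using c D_def by (metis card.empty zero_le)
    define s where "s = Min ((\<lambda>k. \<bar>x k\<bar>) ` D)"
    have "s \<in> (\<lambda>k. \<bar>x k\<bar>) ` D" unfolding s_def using fD Dne by (intro Min_in) auto
    hence st: "s > t" using D_def by auto
    have sle: "\<And>k. k \<in> D \<Longrightarrow> s \<le> \<bar>x k\<bar>" unfolding s_def using fD by simp
    have "s \<le> decr_rearr x n" unfolding decr_rearr_def
    proof (rule cInf_greatest[OF S_ne[OF assms(1)]])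
      fix s' assume s': "s' \<in> {t. t \<ge> 0 \<and> finite {k. \<bar>x k\<bar> > t} \<and> card {k. \<bar>x k\<bar> > t} \<le> n}"
      show "s \<le> s'"
      proof (rule ccontr)
        assume "\<not> s \<le> s'"
        hence "D \<subseteq> {k. \<bar>x k\<bar> > s'}" using sle by force
        hence "card D \<le> card {k. \<bar>x k\<bar> > s'}" using s' by (intro card_mono) auto
        then show False using s' c D_def by auto
      qed
    qed
    then show False using st le by linarith
  qed
qed

lemma dr_level:
  assumes "(x::nat\<Rightarrow>real) \<longlonglongrightarrow> 0" "t > 0"
  shows "{n. decr_rearr x n > t} = {..< card {k. \<bar>x k\<bar> > t}}"
  using dr_le_iff[OF assms] by (auto simp: not_le[symmetric])
lemma FL:
  fixes u v :: "nat \<Rightarrow> real" and f :: "real \<Rightarrow> 'b::comm_monoid_add"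
  shows "finite A \<Longrightarrow> finite B \<Longrightarrow> card A = n \<Longrightarrow> (\<forall>j\<in>A. u j > t) \<Longrightarrow> (\<forall>j\<in>B. v j > t) \<Longrightarrow>
    (\<forall>s\<ge>t. card {j\<in>A. u j > s} = card {j\<in>B. v j > s}) \<Longrightarrow> (\<Sum>j\<in>A. f (u j)) = (\<Sum>j\<in>B. f (v j))"
proof (induction n arbitrary: A B)
  case 0
  have "{j\<in>A. t < u j} = A" "{j\<in>B. t < v j} = B" using 0(4,5) by auto
  hence "card B = card A" using 0(6) by (metis order_refl)
  then show ?case using 0 by simp
next
  case (Suc n)
  have "{j\<in>A. t < u j} = A" "{j\<in>B. t < v j} = B" using Suc(5,6) by auto
  hence cB: "card B = card A" using Suc(7) by (metis order_refl)
  have Ane: "A \<noteq> {}" using Suc by auto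
  have Bne: "B \<noteq> {}" using cB Suc by auto
  define M where "M = Max (u ` A)"
  define M' where "M' = Max (v ` B)"
  obtain j0 where j0: "j0 \<in> A" "u j0 = M" proof -
    have "M \<in> u ` A" unfolding M_def using Ane Suc(2) by (intro Max_in) auto
    then show ?thesis using that by blast
  qed
  obtain k0 where k0: "k0 \<in> B" "v k0 = M'" proof -
    have "M' \<in> v ` B" unfolding M'_def using Bne Suc(3) by (intro Max_in) auto
    then show ?thesis using that by blast
  qed
  have uM: "\<And>j. j \<in> A \<Longrightarrow> u j \<le> M" using Suc(2) M_def by simp
  have vM: "\<And>j. j \<in> B \<Longrightarrow> v j \<le> M'" using Suc(3) M'_def by simp
  have MM: "M = M'"
  proof (rule ccontr)
    assume "M \<noteq> M'"
    then consider "M' < M" | "M < M'" by linarith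
    then show False
    proof cases
      case 1
      have "M' \<ge> t" using k0 Suc(6) by force
      hence "card {j\<in>A. u j > M'} = card {j\<in>B. v j > M'}" using Suc(7) by blast
      moreover have "{j\<in>B. v j > M'} = {}" using vM by force
      moreover have "j0 \<in> {j\<in>A. u j > M'}" using j0 1 by auto
      ultimately show False using Suc(2) by (metis (no_types, lifting) card_0_eq empty_iff finite_subset mem_Collect_eq subsetI)
    next
      case 2
      have "M \<ge> t" using j0 Suc(5) by force
      hence "card {j\<in>A. u j > M} = card {j\<in>B. v j > M}" using Suc(7) by blast
      moreover have "{j\<in>A. u j > M} = {}" using uM by force
      moreover have "k0 \<in> {j\<in>B. v j > M}" using k0 2 by auto
      ultimately show False using Suc(3) by (metis (no_types, lifting) card_0_eq empty_iff finite_subset mem_Collect_eq subsetI)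
    qed
  qed
  have IH: "(\<Sum>j\<in>A-{j0}. f (u j)) = (\<Sum>j\<in>B-{k0}. f (v j))"
  proof (rule Suc.IH)
    show "finite (A - {j0})" "finite (B - {k0})" using Suc by auto
    show "card (A - {j0}) = n" using Suc j0 by simp
    show "\<forall>j\<in>A - {j0}. t < u j" "\<forall>j\<in>B - {k0}. t < v j" using Suc by auto
    show "\<forall>s\<ge>t. card {j \<in> A - {j0}. s < u j} = card {j \<in> B - {k0}. s < v j}"
    proof (intro allI impI)
      fix s assume s: "s \<ge> t"
      have e1: "{j \<in> A - {j0}. s < u j} = {j \<in> A. s < u j} - {j0}" by auto
      have e2: "{j \<in> B - {k0}. s < v j} = {j \<in> B. s < v j} - {k0}" by auto
      have "card {j \<in> A. s < u j} = card {j \<in> B. s < v j}" using Suc(7) s by blast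
      then show "card {j \<in> A - {j0}. s < u j} = card {j \<in> B - {k0}. s < v j}"
        unfolding e1 e2 using j0 k0 MM by (simp add: card_Diff_singleton_if)
    qed
  qed
  have "(\<Sum>j\<in>A. f (u j)) = f (u j0) + (\<Sum>j\<in>A-{j0}. f (u j))" using Suc(2) j0 by (simp add: sum.remove)
  also have "\<dots> = f (v k0) + (\<Sum>j\<in>B-{k0}. f (v j))" using IH j0 k0 MM by simp
  also have "\<dots> = (\<Sum>j\<in>B. f (v j))" using Suc(3) k0 by (simp add: sum.remove)
  finally show ?case .
qed

lemma sum_le_rearr:
  fixes u v :: "nat \<Rightarrow> real" and g :: "real \<Rightarrow> real"
  assumes u0: "\<And>j. u j \<ge> 0" and v0: "\<And>j. v j \<ge> 0"
    and fu: "\<And>t. t > 0 \<Longrightarrow> finite {j. u j > t}" and fv: "\<And>t. t > 0 \<Longrightarrow> finite {j. v j > t}"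
    and cc: "\<And>t. t > 0 \<Longrightarrow> card {j. u j > t} = card {j. v j > t}"
    and g0: "g 0 = 0"
  shows "(\<Sum>j. ennreal (g (u j))) \<le> (\<Sum>j. ennreal (g (v j)))"
proof (rule suminf_le_const[OF summableI])
  fix n
  define F where "F = {i. i < n \<and> u i > 0}"
  have fF: "finite F" unfolding F_def by simp
  have "sum (\<lambda>j. ennreal (g (u j))) {..<n} = sum (\<lambda>j. ennreal (g (u j))) F"
  proof (rule sum.mono_neutral_right)
    show "finite {..<n}" by simp
    show "F \<subseteq> {..<n}" unfolding F_def by auto
    show "\<forall>i\<in>{..<n} - F. ennreal (g (u i)) = 0"
    proof
      fix i assume "i \<in> {..<n} - F"
      hence "u i = 0" using u0[of i] unfolding F_def by force
      then show "ennreal (g (u i)) = 0" using g0 by simp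
    qed
  qed
  also have "\<dots> \<le> (\<Sum>j. ennreal (g (v j)))"
  proof (cases "F = {}")
    case True then show ?thesis by simp
  next
    case False
    define t where "t = Min (u ` F) / 2"
    have "Min (u ` F) \<in> u ` F" using fF False by (intro Min_in) auto
    hence tpos: "t > 0" unfolding t_def F_def by auto
    have FA: "F \<subseteq> {j. u j > t}"
    proof
      fix j assume j: "j \<in> F"
      hence "Min (u ` F) \<le> u j" using fF by simp
      moreover have "u j > 0" using j F_def by simp
      ultimately show "j \<in> {j. u j > t}" unfolding t_def by simp
    qed
    have "sum (\<lambda>j. ennreal (g (u j))) F \<le> sum (\<lambda>j. ennreal (g (u j))) {j. u j > t}"
      using FA fu[OF tpos] by (intro sum_mono2) auto
    also have "\<dots> = sum (\<lambda>j. ennreal (g (v j))) {j. v j > t}"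
    proof (rule FL[where t=t and u=u and v=v and f="\<lambda>r. ennreal (g r)", OF _ _ refl])
      show "finite {j. u j > t}" "finite {j. v j > t}" using fu fv tpos by auto
      show "\<forall>j\<in>{j. t < u j}. t < u j" "\<forall>j\<in>{j. t < v j}. t < v j" by auto
      show "\<forall>s\<ge>t. card {j \<in> {j. t < u j}. s < u j} = card {j \<in> {j. t < v j}. s < v j}"
      proof (intro allI impI)
        fix s assume s: "t \<le> s"
        have "{j \<in> {j. t < u j}. s < u j} = {j. s < u j}" "{j \<in> {j. t < v j}. s < v j} = {j. s < v j}"
          using s by auto
        then show "card {j \<in> {j. t < u j}. s < u j} = card {j \<in> {j. t < v j}. s < v j}"
          using cc[of s] s tpos by simp
      qed
    qed
    also have "\<dots> \<le> (\<Sum>j. ennreal (g (v j)))"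
      using fv[OF tpos] by (intro sum_le_suminf[OF summableI]) auto
    finally show ?thesis .
  qed
  finally show "sum (\<lambda>j. ennreal (g (u j))) {..<n} \<le> (\<Sum>j. ennreal (g (v j)))" .
qed

lemma sum_rearr:
  fixes x :: "nat \<Rightarrow> real" and g :: "real \<Rightarrow> real"
  assumes "x \<longlonglongrightarrow> 0" "g 0 = 0"
  shows "(\<Sum>j. ennreal (g \<bar>x j\<bar>)) = (\<Sum>j. ennreal (g (decr_rearr x j)))"
proof -
  have fu: "\<And>t. t > 0 \<Longrightarrow> finite {j. \<bar>x j\<bar> > t}" using D_fin[OF assms(1)] by blast
  have lv: "\<And>t. t > 0 \<Longrightarrow> {j. decr_rearr x j > t} = {..< card {k. \<bar>x k\<bar> > t}}"
    using dr_level[OF assms(1)] by blast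
  have fv: "\<And>t. t > 0 \<Longrightarrow> finite {j. decr_rearr x j > t}" using lv by simp
  have cc: "\<And>t. t > 0 \<Longrightarrow> card {j. \<bar>x j\<bar> > t} = card {j. decr_rearr x j > t}" using lv by simp
  show ?thesis
  proof (rule antisym)
    show "(\<Sum>j. ennreal (g \<bar>x j\<bar>)) \<le> (\<Sum>j. ennreal (g (decr_rearr x j)))"
      by (rule sum_le_rearr[where u="\<lambda>j. \<bar>x j\<bar>"]) (use fu fv cc dr_nonneg[OF assms(1)] assms(2) in auto)
    show "(\<Sum>j. ennreal (g (decr_rearr x j))) \<le> (\<Sum>j. ennreal (g \<bar>x j\<bar>))"
      by (rule sum_le_rearr[where v="\<lambda>j. \<bar>x j\<bar>"]) (use fu fv cc dr_nonneg[OF assms(1)] assms(2) in auto)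
  qed
qed

lemma three_chord:
  fixes f :: "real \<Rightarrow> real"
  assumes "convex_on {0..} f" "0 \<le> a" "a < b" "b < c"
  shows "(f b - f a) / (b - a) \<le> (f c - f a) / (c - a)"
    and "(f c - f a) / (c - a) \<le> (f c - f b) / (c - b)"
proof -
  have A: "(f a - f b) / (a - b) = (f b - f a) / (b - a)" for a b :: real
    by (metis minus_diff_eq minus_divide_divide)
  have "a \<in> {0..}" "c \<in> {0..}" using assms by auto
  note L = convex_on_slope_le[OF assms(1) this assms(3) assms(4)]
  show "(f b - f a) / (b - a) \<le> (f c - f a) / (c - a)" using L(1) A by metis
  show "(f c - f a) / (c - a) \<le> (f c - f b) / (c - b)" using L(2) A by metis
qed

lemma pivot:
  fixes \<Psi> :: "real \<Rightarrow> real" and r :: real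
  assumes mo: "mono_on {0..} \<Psi>" and cv: "convex_on {0..} \<Psi>" and r0: "r \<ge> 0"
  shows "\<exists>c\<ge>0. (\<forall>u v. r \<le> v \<and> v \<le> u \<longrightarrow> c * (u - v) \<le> \<Psi> u - \<Psi> v) \<and>
                (\<forall>u v. 0 \<le> u \<and> u \<le> v \<and> v \<le> r \<longrightarrow> \<Psi> v - \<Psi> u \<le> c * (v - u))"
proof (cases "r = 0")
  case True
  show ?thesis
  proof (intro exI[of _ 0] conjI allI impI)
    fix u v :: real assume "r \<le> v \<and> v \<le> u"
    then have "\<Psi> v \<le> \<Psi> u" using mo True by (intro mono_onD[OF mo]) auto
    then show "0 * (u - v) \<le> \<Psi> u - \<Psi> v" by simp
  next
    fix u v :: real assume "0 \<le> u \<and> u \<le> v \<and> v \<le> r"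
    then have "u = v" using True by auto
    then show "\<Psi> v - \<Psi> u \<le> 0 * (v - u)" by simp
  qed simp
next
  case False
  hence rp: "r > 0" using r0 by simp
  define sl where "sl = (\<lambda>a b. (\<Psi> b - \<Psi> a) / (b - a))"
  have slm: "(\<Psi> b - \<Psi> a) = sl a b * (b - a)" if "a < b" for a b
    using that unfolding sl_def by simp
  define S where "S = {sl s r | s. 0 \<le> s \<and> s < r}"
  define c where "c = Sup S"
  have Sne: "S \<noteq> {}" unfolding S_def using rp by blast
  have Sbdd: "bdd_above S"
  proof (rule bdd_aboveI)
    fix y assume "y \<in> S"
    then obtain s where "y = sl s r" "0 \<le> s" "s < r" unfolding S_def by blast
    then show "y \<le> sl r (r+1)" unfolding sl_def
      using three_chord[OF cv, of s r "r+1"] by linarith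
  qed
  have Sup_ge: "y \<le> c" if "y \<in> S" for y unfolding c_def using that Sbdd by (rule cSup_upper)
  have c0: "c \<ge> 0"
  proof -
    have "sl 0 r \<in> S" unfolding S_def using rp by blast
    moreover have "sl 0 r \<ge> 0" unfolding sl_def using mo rp by (auto dest: mono_onD[of _ _ 0 r])
    ultimately show ?thesis using Sup_ge by fastforce
  qed
  show ?thesis
  proof (intro exI[of _ c] conjI allI impI c0)
    fix u v :: real assume uv: "r \<le> v \<and> v \<le> u"
    show "c * (u - v) \<le> \<Psi> u - \<Psi> v"
    proof (cases "v = u")
      case True then show ?thesis by simp
    next
      case False
      hence vu: "v < u" using uv by simp
      have "c \<le> sl v u" unfolding c_def
      proof (rule cSup_least[OF Sne])
        fix y assume "y \<in> S"
        then obtain s where y: "y = sl s r" "0 \<le> s" "s < r" unfolding S_def by blast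
        show "y \<le> sl v u"
        proof (cases "r = v")
          case True
          have "r < u" using True vu by simp
          then show ?thesis using y three_chord[OF cv, of s r u] unfolding sl_def True[symmetric] by linarith
        next
          case False
          hence "r < v" using uv by simp
          then show ?thesis using y three_chord[OF cv, of s r v] three_chord[OF cv, of r v u] vu rp
            unfolding sl_def by linarith
        qed
      qed
      then show ?thesis using slm[OF vu] vu by (simp add: mult_right_mono)
    qed
  next
    fix u v :: real assume uv: "0 \<le> u \<and> u \<le> v \<and> v \<le> r"
    show "\<Psi> v - \<Psi> u \<le> c * (v - u)"
    proof (cases "u = v")
      case True then show ?thesis by simp
    next
      case False
      hence vu: "u < v" using uv by simp
      have "sl u v \<le> c"
      proof (cases "v = r")
        case True
        then show ?thesis using Sup_ge[of "sl u r"] uv vu unfolding S_def by blast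
      next
        case False
        hence "v < r" using uv by simp
        then have "sl u v \<le> sl u r" using three_chord[OF cv, of u v r] uv vu unfolding sl_def by linarith
        moreover have "sl u r \<in> S" using uv vu \<open>v < r\<close> unfolding S_def by auto
        hence "sl u r \<le> c" by (rule Sup_ge)
        ultimately show ?thesis by linarith
      qed
      then show ?thesis using slm[OF vu] vu by (simp add: mult_right_mono)
    qed
  qed
qed


theorem mainTheorem19:
  fixes \<Phi> \<Psi> :: "real \<Rightarrow> real" and x y :: "nat \<Rightarrow> real"
  assumes Phi_mono: "mono_on {0..} \<Phi>" and Phi_0: "\<Phi> 0 = 0"
    and Phi_nonneg: "\<And>t. t \<ge> 0 \<Longrightarrow> \<Phi> t \<ge> 0"
    and Psi_mono: "mono_on {0..} \<Psi>" and Psi_convex: "convex_on {0..} \<Psi>" and Psi_0: "\<Psi> 0 = 0"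
    and Psi_nonneg: "\<And>t. t \<ge> 0 \<Longrightarrow> \<Psi> t \<ge> 0"
    and x_lim: "x \<longlonglongrightarrow> 0" and y_lim: "y \<longlonglongrightarrow> 0"
    and xy: "gtrless x y"
    and sum_le: "(\<Sum>j. ennreal (\<Phi> \<bar>y j\<bar>)) \<le> (\<Sum>j. ennreal (\<Phi> \<bar>x j\<bar>))"
    and sum_fin: "(\<Sum>j. ennreal (\<Phi> \<bar>x j\<bar>)) < \<infinity>"
  shows "(\<Sum>j. ennreal (\<Psi> (\<Phi> \<bar>x j\<bar>))) \<ge> (\<Sum>j. ennreal (\<Psi> (\<Phi> \<bar>y j\<bar>)))"
proof -
  obtain n0 where n0: "\<And>n. n \<le> n0 \<Longrightarrow> decr_rearr x n \<ge> decr_rearr y n"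
    "\<And>n. n > n0 \<Longrightarrow> decr_rearr x n \<le> decr_rearr y n"
    using xy unfolding gtrless_def by blast
  define a where "a = (\<lambda>n. \<Phi> (decr_rearr x n))"
  define b where "b = (\<lambda>n. \<Phi> (decr_rearr y n))"
  have xs0: "\<And>n. decr_rearr x n \<ge> 0" using dr_nonneg[OF x_lim] by blast
  have ys0: "\<And>n. decr_rearr y n \<ge> 0" using dr_nonneg[OF y_lim] by blast
  have a0: "\<And>n. a n \<ge> 0" unfolding a_def using xs0 Phi_nonneg by blast
  have b0: "\<And>n. b n \<ge> 0" unfolding b_def using ys0 Phi_nonneg by blast
  have bmono: "b m \<le> b n" if "n \<le> m" for n m
    unfolding b_def using ys0 dr_antimono[OF y_lim that] by (intro mono_onD[OF Phi_mono]) auto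
  define r where "r = b n0"
  obtain c where c0: "c \<ge> 0"
    and c1: "\<And>u v. r \<le> v \<Longrightarrow> v \<le> u \<Longrightarrow> c * (u - v) \<le> \<Psi> u - \<Psi> v"
    and c2: "\<And>u v. 0 \<le> u \<Longrightarrow> u \<le> v \<Longrightarrow> v \<le> r \<Longrightarrow> \<Psi> v - \<Psi> u \<le> c * (v - u)"
    using pivot[OF Psi_mono Psi_convex, of r] b0 unfolding r_def by blast
  have termR: "\<Psi> (b n) + c * a n \<le> \<Psi> (a n) + c * b n" for n
  proof (cases "n \<le> n0")
    case True
    have "b n \<le> a n" unfolding a_def b_def using n0(1)[OF True] ys0 xs0
      by (intro mono_onD[OF Phi_mono]) auto
    moreover have "r \<le> b n" unfolding r_def using bmono True by blast
    ultimately show ?thesis using c1[of "b n" "a n"] by (simp add: algebra_simps)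
  next
    case False
    have "a n \<le> b n" unfolding a_def b_def using n0(2) False xs0 ys0
      by (intro mono_onD[OF Phi_mono]) auto
    moreover have "b n \<le> r" unfolding r_def using bmono False by simp
    ultimately show ?thesis using c2[of "a n" "b n"] a0[of n] by (simp add: algebra_simps)
  qed
  have termE: "ennreal (\<Psi> (b n)) + ennreal c * ennreal (a n) \<le> ennreal (\<Psi> (a n)) + ennreal c * ennreal (b n)" for n
  proof -
    have p1: "\<Psi> (b n) \<ge> 0" "\<Psi> (a n) \<ge> 0" using Psi_nonneg a0 b0 by auto
    have "ennreal (\<Psi> (b n) + c * a n) \<le> ennreal (\<Psi> (a n) + c * b n)"
      using termR[of n] by (rule ennreal_leI)
    then show ?thesis using p1 c0 a0[of n] b0[of n] by (simp add: ennreal_mult)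
  qed
  define SA where "SA = (\<Sum>n. ennreal (a n))"
  define SB where "SB = (\<Sum>n. ennreal (b n))"
  have SAeq: "SA = (\<Sum>j. ennreal (\<Phi> \<bar>x j\<bar>))" unfolding SA_def a_def
    using sum_rearr[OF x_lim, of \<Phi>, OF Phi_0] by simp
  have SBeq: "SB = (\<Sum>j. ennreal (\<Phi> \<bar>y j\<bar>))" unfolding SB_def b_def
    using sum_rearr[OF y_lim, of \<Phi>, OF Phi_0] by simp
  have SBA: "SB \<le> SA" using sum_le SAeq SBeq by simp
  have SAfin: "SA < \<infinity>" using sum_fin SAeq by simp
  have "(\<Sum>n. ennreal (\<Psi> (b n))) + ennreal c * SA = (\<Sum>n. ennreal (\<Psi> (b n)) + ennreal c * ennreal (a n))"
    unfolding SA_def by (simp only: ennreal_suminf_cmult[symmetric] suminf_add[OF summableI summableI])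
  also have "\<dots> \<le> (\<Sum>n. ennreal (\<Psi> (a n)) + ennreal c * ennreal (b n))"
    by (intro suminf_le[OF _ summableI summableI] termE)
  also have "\<dots> = (\<Sum>n. ennreal (\<Psi> (a n))) + ennreal c * SB"
    unfolding SB_def by (simp only: ennreal_suminf_cmult[symmetric] suminf_add[OF summableI summableI])
  finally have main: "(\<Sum>n. ennreal (\<Psi> (b n))) + ennreal c * SA \<le> (\<Sum>n. ennreal (\<Psi> (a n))) + ennreal c * SB" .
  have "ennreal c * SB \<le> ennreal c * SA" using SBA by (intro mult_left_mono) auto
  hence "(\<Sum>n. ennreal (\<Psi> (b n))) + ennreal c * SB \<le> (\<Sum>n. ennreal (\<Psi> (a n))) + ennreal c * SB"
    using main by (meson add_left_mono order_trans)
  moreover have "ennreal c * SB \<noteq> \<infinity>"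
  proof -
    have "SB < top" using SBA SAfin by (simp add: le_less_trans)
    hence "ennreal c * SB < top" by (simp add: ennreal_mult_less_top)
    then show ?thesis by simp
  qed
  ultimately have fin: "(\<Sum>n. ennreal (\<Psi> (b n))) \<le> (\<Sum>n. ennreal (\<Psi> (a n)))"
    using ennreal_add_left_cancel_le by (metis add.commute)
  have "(\<Sum>j. ennreal (\<Psi> (\<Phi> \<bar>x j\<bar>))) = (\<Sum>n. ennreal (\<Psi> (a n)))" unfolding a_def
    using sum_rearr[OF x_lim, of "\<lambda>t. \<Psi> (\<Phi> t)"] Phi_0 Psi_0 by simp
  moreover have "(\<Sum>j. ennreal (\<Psi> (\<Phi> \<bar>y j\<bar>))) = (\<Sum>n. ennreal (\<Psi> (b n)))" unfolding b_def
    using sum_rearr[OF y_lim, of "\<lambda>t. \<Psi> (\<Phi> t)"] Phi_0 Psi_0 by simp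
  ultimately show ?thesis using fin by simp
qed

end
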